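(* Let $\Sigma$ be an $N$-fan in $V$ that is relatively full-dimensional. Then the $R$-module $\mathrm{Pic}_W(\Sigma)$ is free (of finite rank).
   Context: Let $R\subseteq\mathbb{R}$ be a principal ideal subring with field of fractions $K\subseteq\mathbb{R}$. Let $V$ be a real vector space of finite dimension $n$, let $N\subseteq V$ be a lattice (a free $\mathbb{Z}$-submodule of rank $n$ spanning $V$), and let $W\subseteq V$ be the $R$-submodule generated by $N$. Put $W^*=\{u\in V^*\mid u(W)\subseteq R\}$, identified with $\mathrm{Hom}_R(W,R)$. An $N$-fan is a finite set $\Sigma$ of sharp (containing no line) polyhedral cones in $V$, each the conic hull of a finite subset of $N$, such that every face of a cone of $\Sigma$ lies in $\Sigma$ and the intersection of two cones of $\Sigma$ is a face of each. Write $\tau\preccurlyeq\sigma$ if $\tau$ is a face of $\sigma$. For a cone $\sigma$ put $\sigma^\perp=\{u\in V^*\mid u(\sigma)=0\}$, $\sigma^\perp_{W^*}=\sigma^\perp\cap W^*$, and $\sigma^\vee=\{u\in V^*\mid u(\sigma)\subseteq\mathbb{R}_{\ge0}\}$. Let $\langle\Sigma\rangle$ be the real span of $\bigcup\Sigma$; $\Sigma$ is relatively full-dimensional if $\Sigma$ contains a cone of dimension $\dim\langle\Sigma\rangle$. Picard module: let $P=(W^* )^\Sigma/\prod_{\sigma\in\Sigma}\sigma^\perp_{W^*}$, the class of a family $(m_\sigma)_{\sigma}$ being written $(m_\sigma+\sigma^\vee)_\sigma$. Let $\overline P\subseteq P$ be the submodule of classes of families with $m_\sigma-m_\tau\in\tau^\perp$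 for all $\tau\preccurlyeq\sigma\in\Sigma$ (this condition does not depend on the representative), let $K_W\subseteq\overline P$ be the image of the diagonal map $W^*\to P$, $m\mapsto(m+\sigma^\vee)_\sigma$, and let $\mathrm{Pic}_W(\Sigma)=\overline P/K_W$. *)

theory Defs
  imports "HOL-Analysis.Analysis"
begin

definition subring_of_reals :: "real set \<Rightarrow> bool" where
  "subring_of_reals R \<longleftrightarrow> 0 \<in> R \<and> 1 \<in> R \<and>
     (\<forall>x\<in>R. \<forall>y\<in>R. x + y \<in> R \<and> x - y \<in> R \<and> x * y \<in> R)"

definition real_subring_ideal :: "real set \<Rightarrow> real set \<Rightarrow> bool" where
  "real_subring_ideal R I \<longleftrightarrow> I \<subseteq> R \<and> 0 \<in> I \<and>
     (\<forall>x\<in>I. \<forall>y\<in>I. x + y \<in> I \<and> x - y \<in> I) \<and> (\<forall>r\<in>R. \<forall>x\<in>I. r * x \<in> I)"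

text \<open>A subring of the reals (automatically an integral domain) in which every ideal is principal.\<close>
definition principal_ideal_subring :: "real set \<Rightarrow> bool" where
  "principal_ideal_subring R \<longleftrightarrow> subring_of_reals R \<and>
     (\<forall>I. real_subring_ideal R I \<longrightarrow> (\<exists>a\<in>R. I = {r * a | r. r \<in> R}))"

text \<open>N is a lattice in V: the integer span of a real basis of V (equivalently a free
  Z-submodule of rank dim V spanning V).\<close>
definition is_lattice :: "'a::euclidean_space set \<Rightarrow> bool" where
  "is_lattice N \<longleftrightarrow> (\<exists>B. independent B \<and> span B = UNIV \<and>
      N = {(\<Sum>b\<in>B. c b *\<^sub>R b) | c. \<forall>b\<in>B. c b \<in> \<int>})"

definition Rspan :: "real set \<Rightarrow> 'a::real_vector set \<Rightarrow> 'a set" where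
  "Rspan R S = {(\<Sum>x\<in>F. c x *\<^sub>R x) | F c. finite F \<and> F \<subseteq> S \<and> (\<forall>x\<in>F. c x \<in> R)}"

text \<open>Linear functionals V \<rightarrow> \<real> represent V*.\<close>
definition dual_module :: "real set \<Rightarrow> 'a::euclidean_space set \<Rightarrow> ('a \<Rightarrow> real) set" where
  "dual_module R W = {u. linear u \<and> (\<forall>w\<in>W. u w \<in> R)}"

definition perp :: "'a::euclidean_space set \<Rightarrow> ('a \<Rightarrow> real) set" where
  "perp \<sigma> = {u. linear u \<and> (\<forall>x\<in>\<sigma>. u x = 0)}"

definition cone_gen :: "'a::euclidean_space set \<Rightarrow> 'a set" where
  "cone_gen S = {(\<Sum>x\<in>S. c x *\<^sub>R x) | c. \<forall>x\<in>S. c x \<ge> 0}"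

definition N_cone :: "'a::euclidean_space set \<Rightarrow> 'a set \<Rightarrow> bool" where
  "N_cone N \<sigma> \<longleftrightarrow> (\<exists>S. finite S \<and> S \<subseteq> N \<and> \<sigma> = cone_gen S)"

definition sharp_cone :: "'a::euclidean_space set \<Rightarrow> bool" where
  "sharp_cone \<sigma> \<longleftrightarrow> (\<forall>x. x \<in> \<sigma> \<and> - x \<in> \<sigma> \<longrightarrow> x = 0)"

definition cone_face :: "'a::euclidean_space set \<Rightarrow> 'a set \<Rightarrow> bool" where
  "cone_face \<tau> \<sigma> \<longleftrightarrow> (\<exists>u. linear u \<and> (\<forall>x\<in>\<sigma>. u x \<ge> (0::real)) \<and> \<tau> = {x\<in>\<sigma>. u x = 0})"

definition N_fan :: "'a::euclidean_space set \<Rightarrow> 'a set set \<Rightarrow> bool" where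
  "N_fan N \<Sigma> \<longleftrightarrow> finite \<Sigma> \<and>
     (\<forall>\<sigma>\<in>\<Sigma>. N_cone N \<sigma> \<and> sharp_cone \<sigma>) \<and>
     (\<forall>\<sigma>\<in>\<Sigma>. \<forall>\<tau>. cone_face \<tau> \<sigma> \<longrightarrow> \<tau> \<in> \<Sigma>) \<and>
     (\<forall>\<sigma>\<in>\<Sigma>. \<forall>\<sigma>'\<in>\<Sigma>. cone_face (\<sigma> \<inter> \<sigma>') \<sigma> \<and> cone_face (\<sigma> \<inter> \<sigma>') \<sigma>')"

definition rel_full_dim :: "'a::euclidean_space set set \<Rightarrow> bool" where
  "rel_full_dim \<Sigma> \<longleftrightarrow> (\<exists>\<sigma>\<in>\<Sigma>. dim \<sigma> = dim (span (\<Union>\<Sigma>)))"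

text \<open>Families (m_\<sigma>)_{\<sigma>\<in>\<Sigma>} are functions on cones, normalised to 0 outside \<Sigma>.
  Pbar_fam: representatives of classes in P-bar (families in (W*)^\<Sigma> with the compatibility
  condition).  Pic_rel: representatives of zero in Pic = P-bar / K_W, i.e. families congruent
  modulo \<Prod> sigma-perp in W* to a diagonal family (m + sigma-dual)_\<sigma>, m \<in> W*.\<close>
definition Pbar_fam :: "real set \<Rightarrow> 'a::euclidean_space set \<Rightarrow> 'a set set \<Rightarrow> ('a set \<Rightarrow> 'a \<Rightarrow> real) set" where
  "Pbar_fam R W \<Sigma> = {m. (\<forall>\<sigma>. \<sigma> \<notin> \<Sigma> \<longrightarrow> m \<sigma> = (\<lambda>_. 0)) \<and>
      (\<forall>\<sigma>\<in>\<Sigma>. m \<sigma> \<in> dual_module R W) \<and>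
      (\<forall>\<sigma>\<in>\<Sigma>. \<forall>\<tau>\<in>\<Sigma>. cone_face \<tau> \<sigma> \<longrightarrow> (\<lambda>x. m \<sigma> x - m \<tau> x) \<in> perp \<tau>)}"

definition Pic_rel :: "real set \<Rightarrow> 'a::euclidean_space set \<Rightarrow> 'a set set \<Rightarrow> ('a set \<Rightarrow> 'a \<Rightarrow> real) set" where
  "Pic_rel R W \<Sigma> = {m. (\<forall>\<sigma>. \<sigma> \<notin> \<Sigma> \<longrightarrow> m \<sigma> = (\<lambda>_. 0)) \<and>
      (\<forall>\<sigma>\<in>\<Sigma>. m \<sigma> \<in> dual_module R W) \<and>
      (\<exists>u\<in>dual_module R W. \<forall>\<sigma>\<in>\<Sigma>. (\<lambda>x. m \<sigma> x - u x) \<in> perp \<sigma>)}"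

definition quotient_free_finite_rank :: "real set \<Rightarrow> ('i \<Rightarrow> 'j \<Rightarrow> real) set \<Rightarrow> ('i \<Rightarrow> 'j \<Rightarrow> real) set \<Rightarrow> bool" where
  "quotient_free_finite_rank R M L \<longleftrightarrow> (\<exists>(k::nat) (e :: nat \<Rightarrow> 'i \<Rightarrow> 'j \<Rightarrow> real).
      (\<forall>i<k. e i \<in> M) \<and>
      (\<forall>m\<in>M. \<exists>r. (\<forall>i<k. r i \<in> R) \<and> (\<lambda>s x. m s x - (\<Sum>i<k. r i * e i s x)) \<in> L) \<and>
      (\<forall>r. (\<forall>i<k. r i \<in> R) \<and> (\<lambda>s x. \<Sum>i<k. r i * e i s x) \<in> L \<longrightarrow> (\<forall>i<k. r i = 0)))"

definition Pic_W_free :: "real set \<Rightarrow> 'a::euclidean_space set \<Rightarrow> 'a set set \<Rightarrow> bool" where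
  "Pic_W_free R W \<Sigma> \<longleftrightarrow> quotient_free_finite_rank R (Pbar_fam R W \<Sigma>) (Pic_rel R W \<Sigma>)"

end

theory Submission
  imports Defs
begin

lemma subringD:
  assumes "subring_of_reals R"
  shows "0 \<in> R" "1 \<in> R" "x \<in> R \<Longrightarrow> y \<in> R \<Longrightarrow> x + y \<in> R"
    "x \<in> R \<Longrightarrow> y \<in> R \<Longrightarrow> x - y \<in> R" "x \<in> R \<Longrightarrow> y \<in> R \<Longrightarrow> x * y \<in> R"
  using assms unfolding subring_of_reals_def by auto

lemma subring_uminus: assumes "subring_of_reals R" "x \<in> R" shows "- x \<in> R"
  using subringD(1)[OF assms(1)] subringD(4)[OF assms(1), of 0 x] assms(2) by simp

lemma subring_sum: "subring_of_reals R \<Longrightarrow> (\<And>i. i \<in> A \<Longrightarrow> f i \<in> R) \<Longrightarrow> sum f A \<in> R"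
proof (induction A rule: infinite_finite_induct)
  case (infinite A) then show ?case using subringD(1) by simp
next
  case empty then show ?case using subringD(1) by simp
next
  case (insert x F) then show ?case using subringD(3) by simp
qed

lemma free_submod:
  fixes M :: "('i \<Rightarrow> real) set"
  assumes pid: "principal_ideal_subring R" and fin: "finite F"
  and M: "\<forall>v\<in>M. (\<forall>i. i \<notin> F \<longrightarrow> v i = 0) \<and> (\<forall>i. v i \<in> R)"
  and z: "(\<lambda>i. 0) \<in> M" and add: "\<forall>v\<in>M. \<forall>w\<in>M. (\<lambda>i. v i + w i) \<in> M"
  and sc: "\<forall>r\<in>R. \<forall>v\<in>M. (\<lambda>i. r * v i) \<in> M"
  shows "\<exists>(k::nat) b. (\<forall>j<k. b j \<in> M) \<and>
     (\<forall>v\<in>M. \<exists>r. (\<forall>j<k. r j \<in> R) \<and> v = (\<lambda>i. \<Sum>j<k. r j * b j i)) \<and>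
     (\<forall>r. (\<lambda>i. \<Sum>j<k. r j * b j i) = (\<lambda>i. 0) \<longrightarrow> (\<forall>j<k. r j = 0))"
  using fin M z add sc
proof (induction F arbitrary: M rule: finite_induct)
  case empty
  have "\<forall>v\<in>M. v = (\<lambda>i. 0)" using empty.prems(1) by auto
  then show ?case by (intro exI[of _ 0]) auto
next
  case (insert t F)
  have sr: "subring_of_reals R" using pid unfolding principal_ideal_subring_def by blast
  define M' where "M' = {v\<in>M. v t = 0}"
  have "\<exists>(k::nat) b. (\<forall>j<k. b j \<in> M') \<and>
     (\<forall>v\<in>M'. \<exists>r. (\<forall>j<k. r j \<in> R) \<and> v = (\<lambda>i. \<Sum>j<k. r j * b j i)) \<and>
     (\<forall>r. (\<lambda>i. \<Sum>j<k. r j * b j i) = (\<lambda>i. 0) \<longrightarrow> (\<forall>j<k. r j = 0))"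
  proof (rule insert.IH)
    show "\<forall>v\<in>M'. (\<forall>i. i \<notin> F \<longrightarrow> v i = 0) \<and> (\<forall>i. v i \<in> R)"
      using insert.prems(1) unfolding M'_def by auto
    show "(\<lambda>i. 0) \<in> M'" using insert.prems(2) unfolding M'_def by auto
    show "\<forall>v\<in>M'. \<forall>w\<in>M'. (\<lambda>i. v i + w i) \<in> M'" using insert.prems(3) unfolding M'_def by auto
    show "\<forall>r\<in>R. \<forall>v\<in>M'. (\<lambda>i. r * v i) \<in> M'" using insert.prems(4) unfolding M'_def by auto
  qed
  then obtain k :: nat and b :: "nat \<Rightarrow> 'i \<Rightarrow> real" where bM: "\<forall>j<k. b j \<in> M'"
    and bsp: "\<forall>v\<in>M'. \<exists>r. (\<forall>j<k. r j \<in> R) \<and> v = (\<lambda>i. \<Sum>j<k. r j * b j i)"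
    and bind: "\<forall>r. (\<lambda>i. \<Sum>j<k. r j * b j i) = (\<lambda>i. 0) \<longrightarrow> (\<forall>j<k. r j = 0)" by blast
  define I where "I = {v t | v. v \<in> M}"
  have ideal: "real_subring_ideal R I"
    unfolding real_subring_ideal_def
  proof (intro conjI ballI)
    show "I \<subseteq> R" using insert.prems(1) unfolding I_def by auto
    show "0 \<in> I" using insert.prems(2) unfolding I_def by force
  next
    fix x y assume "x \<in> I" "y \<in> I"
    then obtain v w where v: "v \<in> M" "x = v t" and w: "w \<in> M" "y = w t" unfolding I_def by auto
    have "(\<lambda>i. v i + w i) \<in> M" using insert.prems(3) v w by auto
    then show "x + y \<in> I" unfolding I_def using v w by force
    have "(\<lambda>i. (-1) * w i) \<in> M" using insert.prems(4) w subring_uminus[OF sr subringD(2)[OF sr]] by auto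
    then have "(\<lambda>i. v i + (-1) * w i) \<in> M" using insert.prems(3) v by auto
    then show "x - y \<in> I" unfolding I_def using v w by force
  next
    fix r x assume "r \<in> R" "x \<in> I"
    then obtain v where v: "v \<in> M" "x = v t" unfolding I_def by auto
    have "(\<lambda>i. r * v i) \<in> M" using insert.prems(4) v \<open>r \<in> R\<close> by auto
    then show "r * x \<in> I" unfolding I_def using v by force
  qed
  then obtain a where aR: "a \<in> R" and Ia: "I = {r * a | r. r \<in> R}"
    using pid unfolding principal_ideal_subring_def by blast
  show ?case
  proof (cases "a = 0")
    case True
    then have "M' = M" unfolding M'_def using Ia I_def by auto
    then show ?thesis using bM bsp bind unfolding \<open>M' = M\<close> by blast
  next
    case False
    have "a \<in> I" using Ia subringD(2)[OF sr] by force
    then obtain w where wM: "w \<in> M" and wt: "w t = a" unfolding I_def by auto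
    define b' where "b' = b(k := w)"
    have b'b: "\<And>j. j < k \<Longrightarrow> b' j = b j" unfolding b'_def by auto
    have bt: "\<And>j. j < k \<Longrightarrow> b j t = 0" using bM unfolding M'_def by auto
    show ?thesis
    proof (intro exI[of _ "Suc k"] exI[of _ b'] conjI allI impI ballI)
      fix j assume "j < Suc k"
      then show "b' j \<in> M" using bM wM unfolding b'_def M'_def by (cases "j = k") auto
    next
      fix v assume vM: "v \<in> M"
      then have "v t \<in> I" unfolding I_def by auto
      then obtain r where rR: "r \<in> R" and vt: "v t = r * a" using Ia by auto
      have "(\<lambda>i. (- r) * w i) \<in> M" using insert.prems(4) wM subring_uminus[OF sr rR] by auto
      then have "(\<lambda>i. v i + (- r) * w i) \<in> M" using insert.prems(3) vM by auto
      then have "(\<lambda>i. v i + (- r) * w i) \<in> M'" unfolding M'_def using vt wt by auto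
      then obtain s where sR: "\<forall>j<k. s j \<in> R" and seq: "(\<lambda>i. v i + (- r) * w i) = (\<lambda>i. \<Sum>j<k. s j * b j i)"
        using bsp by blast
      show "\<exists>r. (\<forall>j<Suc k. r j \<in> R) \<and> v = (\<lambda>i. \<Sum>j<Suc k. r j * b' j i)"
      proof (intro exI[of _ "s(k := r)"] conjI allI impI)
        fix j assume "j < Suc k" then show "(s(k := r)) j \<in> R" using sR rR by (cases "j = k") auto
      next
        show "v = (\<lambda>i. \<Sum>j<Suc k. (s(k := r)) j * b' j i)"
        proof
          fix i
          have "v i + (- r) * w i = (\<Sum>j<k. s j * b j i)" using seq by metis
          moreover have "(\<Sum>j<k. (s(k := r)) j * b' j i) = (\<Sum>j<k. s j * b j i)"
            by (rule sum.cong) (auto simp: b'b)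
          ultimately show "v i = (\<Sum>j<Suc k. (s(k := r)) j * b' j i)"
            by (simp add: b'_def)
        qed
      qed
    next
      fix r j assume h: "(\<lambda>i. \<Sum>j<Suc k. r j * b' j i) = (\<lambda>i. 0)" and jk: "j < Suc k"
      have eq: "\<And>i. (\<Sum>j<k. r j * b j i) + r k * w i = 0"
      proof -
        fix i
        have "(\<Sum>j<Suc k. r j * b' j i) = 0" using h by metis
        moreover have "(\<Sum>j<k. r j * b' j i) = (\<Sum>j<k. r j * b j i)"
          by (rule sum.cong) (auto simp: b'b)
        ultimately show "(\<Sum>j<k. r j * b j i) + r k * w i = 0" by (simp add: b'_def)
      qed
      have "(\<Sum>j<k. r j * b j t) = 0" using bt by simp
      then have "r k * a = 0" using eq[of t] wt by simp
      then have rk: "r k = 0" using False by simp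
      then have "(\<lambda>i. \<Sum>j<k. r j * b j i) = (\<lambda>i. 0)" using eq by simp
      then have "\<forall>j<k. r j = 0" using bind by blast
      then show "r j = 0" using jk rk by (cases "j = k") auto
    qed
  qed
qed


lemma cone_gen_contains: "finite S \<Longrightarrow> x \<in> S \<Longrightarrow> x \<in> cone_gen S"
  unfolding cone_gen_def
proof (intro CollectI exI[of _ "\<lambda>y. if y = x then 1 else 0"] conjI)
  assume "finite S" "x \<in> S"
  have "(\<Sum>y\<in>S. (if y = x then 1 else 0) *\<^sub>R y) = (\<Sum>y\<in>S. if y = x then y else 0)"
    by (rule sum.cong) auto
  also have "\<dots> = x" using \<open>finite S\<close> \<open>x \<in> S\<close> by (simp add: sum.delta')
  finally show "x = (\<Sum>y\<in>S. (if y = x then 1 else 0) *\<^sub>R y)" by simp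
qed auto

lemma cone_gen_vanish:
  fixes f :: "'a::euclidean_space \<Rightarrow> real"
  assumes "linear f" "\<forall>y\<in>S. f y = 0" "x \<in> cone_gen S"
  shows "f x = 0"
proof -
  obtain c where x: "x = (\<Sum>y\<in>S. c y *\<^sub>R y)" using assms(3) unfolding cone_gen_def by auto
  have "f x = (\<Sum>y\<in>S. c y * f y)" unfolding x using assms(1) by (simp add: linear_sum linear_scale)
  also have "\<dots> = 0" using assms(2) by simp
  finally show ?thesis .
qed

lemma lin_mult: "linear f \<Longrightarrow> linear (\<lambda>x. (r::real) * f x)"
  using real_vector.module_hom_scale[of f r] by simp

theorem proposition1p90:
  fixes R :: "real set" and N :: "'a::euclidean_space set" and \<Sigma> :: "'a set set"
  assumes "principal_ideal_subring R"
    and "is_lattice N"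
    and "N_fan N \<Sigma>"
    and "rel_full_dim \<Sigma>"
  shows "Pic_W_free R (Rspan R N) \<Sigma>"
proof -
  have sr: "subring_of_reals R" using assms(1) unfolding principal_ideal_subring_def by blast
  define W where "W = Rspan R N"
  have NW: "N \<subseteq> W"
  proof
    fix x assume "x \<in> N"
    then show "x \<in> W" unfolding W_def Rspan_def
      by (intro CollectI exI[of _ "{x}"] exI[of _ "\<lambda>_. 1"]) (auto simp: subringD(2)[OF sr])
  qed
  have finS: "finite \<Sigma>" and cones: "\<forall>\<sigma>\<in>\<Sigma>. N_cone N \<sigma>" using assms(3) unfolding N_fan_def by auto
  define S where "S = (\<lambda>\<sigma>. SOME S. finite S \<and> S \<subseteq> N \<and> \<sigma> = cone_gen S)"
  have S: "finite (S \<sigma>) \<and> S \<sigma> \<subseteq> N \<and> \<sigma> = cone_gen (S \<sigma>)" if "\<sigma> \<in> \<Sigma>" for \<sigma>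
  proof -
    have "\<exists>S. finite S \<and> S \<subseteq> N \<and> \<sigma> = cone_gen S" using cones that unfolding N_cone_def by blast
    then show ?thesis unfolding S_def by (rule someI_ex)
  qed
  obtain \<sigma>0 where s0: "\<sigma>0 \<in> \<Sigma>" and dim0: "dim \<sigma>0 = dim (span (\<Union>\<Sigma>))"
    using assms(4) unfolding rel_full_dim_def by blast
  have spaneq: "span \<sigma>0 = span (\<Union>\<Sigma>)"
    by (rule dim_eq_span) (use s0 dim0 in auto)
  have inspan: "x \<in> span \<sigma>0" if "\<sigma> \<in> \<Sigma>" "x \<in> \<sigma>" for \<sigma> x
    using that spaneq span_base[of x "\<Union>\<Sigma>"] by auto
  define T where "T = (SIGMA \<sigma>:\<Sigma>. S \<sigma>)"
  have finT: "finite T" unfolding T_def using finS S by auto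
  define \<Phi> where "\<Phi> = (\<lambda>(m::'a set \<Rightarrow> 'a \<Rightarrow> real) p. if p \<in> T then m (fst p) (snd p) - m \<sigma>0 (snd p) else 0)"
  define P where "P = Pbar_fam R W \<Sigma>"
  define L where "L = Pic_rel R W \<Sigma>"
  have Phi_sum: "\<Phi> (\<lambda>s x. \<Sum>i<k. r i * f i s x) = (\<lambda>p. \<Sum>i<k. r i * \<Phi> (f i) p)" for k r f
    by (auto simp: \<Phi>_def fun_eq_iff sum_subtractf right_diff_distrib)
  have Phi_diff: "\<Phi> (\<lambda>s x. f s x - g s x) = (\<lambda>p. \<Phi> f p - \<Phi> g p)" for f g
    by (auto simp: \<Phi>_def fun_eq_iff)
  have Phi_lin: "\<Phi> (\<lambda>s x. a * f s x + b * g s x) = (\<lambda>p. a * \<Phi> f p + b * \<Phi> g p)" for f g a b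
    by (auto simp: \<Phi>_def fun_eq_iff algebra_simps)
  have kerL: "D \<in> L" if D1: "\<forall>\<sigma>. \<sigma> \<notin> \<Sigma> \<longrightarrow> D \<sigma> = (\<lambda>_. 0)" and D2: "\<forall>\<sigma>\<in>\<Sigma>. D \<sigma> \<in> dual_module R W"
    and D3: "\<Phi> D = (\<lambda>p. 0)" for D
    unfolding L_def Pic_rel_def
  proof (intro CollectI conjI bexI[of _ "D \<sigma>0"])
    show "\<forall>\<sigma>. \<sigma> \<notin> \<Sigma> \<longrightarrow> D \<sigma> = (\<lambda>_. 0)" by fact
    show "\<forall>\<sigma>\<in>\<Sigma>. D \<sigma> \<in> dual_module R W" by fact
    show "D \<sigma>0 \<in> dual_module R W" using D2 s0 by blast
    show "\<forall>\<sigma>\<in>\<Sigma>. (\<lambda>x. D \<sigma> x - D \<sigma>0 x) \<in> perp \<sigma>"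
    proof
      fix \<sigma> assume sS: "\<sigma> \<in> \<Sigma>"
      have lin: "linear (\<lambda>x. D \<sigma> x - D \<sigma>0 x)"
        using D2 sS s0 unfolding dual_module_def by (auto intro: real_vector.module_hom_sub)
      have "\<forall>y\<in>S \<sigma>. D \<sigma> y - D \<sigma>0 y = 0"
      proof
        fix y assume "y \<in> S \<sigma>"
        then have "(\<sigma>, y) \<in> T" unfolding T_def using sS by auto
        then show "D \<sigma> y - D \<sigma>0 y = 0" using fun_cong[OF D3, of "(\<sigma>, y)"] unfolding \<Phi>_def by simp
      qed
      then show "(\<lambda>x. D \<sigma> x - D \<sigma>0 x) \<in> perp \<sigma>"
        unfolding perp_def using lin cone_gen_vanish[OF lin] S[OF sS] by auto
    qed
  qed
  have Lker: "\<Phi> D = (\<lambda>p. 0)" if DL: "D \<in> L" for D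
  proof
    fix p
    show "\<Phi> D p = 0"
    proof (cases "p \<in> T")
      case False then show ?thesis unfolding \<Phi>_def by simp
    next
      case True
      then obtain \<sigma> y where p: "p = (\<sigma>, y)" and sS: "\<sigma> \<in> \<Sigma>" and yS: "y \<in> S \<sigma>" unfolding T_def by auto
      obtain u where u: "\<forall>\<sigma>\<in>\<Sigma>. (\<lambda>x. D \<sigma> x - u x) \<in> perp \<sigma>"
        using DL unfolding L_def Pic_rel_def by blast
      have ys: "y \<in> \<sigma>" using S[OF sS] yS cone_gen_contains by metis
      have 1: "D \<sigma> y - u y = 0" using u sS ys unfolding perp_def by auto
      have "linear (\<lambda>x. D \<sigma>0 x - u x)" "\<forall>x\<in>\<sigma>0. D \<sigma>0 x - u x = 0"
        using u s0 unfolding perp_def by auto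
      then have 2: "D \<sigma>0 y - u y = 0"
        using real_vector.linear_eq_0_on_span[of "\<lambda>x. D \<sigma>0 x - u x" \<sigma>0 y] inspan[OF sS ys] by auto
      show ?thesis using 1 2 True p unfolding \<Phi>_def by simp
    qed
  qed
  have Pclos: "(\<lambda>\<sigma> x. a * m1 \<sigma> x + b * m2 \<sigma> x) \<in> P"
    if m1: "m1 \<in> P" and m2: "m2 \<in> P" and a: "a \<in> R" and b: "b \<in> R" for m1 m2 a b
  proof -
    have A: "\<forall>\<sigma>. \<sigma> \<notin> \<Sigma> \<longrightarrow> m \<sigma> = (\<lambda>_. 0)" "\<forall>\<sigma>\<in>\<Sigma>. linear (m \<sigma>) \<and> (\<forall>w\<in>W. m \<sigma> w \<in> R)"
      "\<forall>\<sigma>\<in>\<Sigma>. \<forall>\<tau>\<in>\<Sigma>. cone_face \<tau> \<sigma> \<longrightarrow> (\<forall>x\<in>\<tau>. m \<sigma> x - m \<tau> x = 0)"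
      if "m \<in> P" for m
      using that unfolding P_def Pbar_fam_def dual_module_def perp_def by auto
    show ?thesis unfolding P_def Pbar_fam_def dual_module_def perp_def
    proof (intro CollectI conjI allI impI ballI)
      fix \<sigma> :: "'a set" assume "\<sigma> \<notin> \<Sigma>"
      then show "(\<lambda>x. a * m1 \<sigma> x + b * m2 \<sigma> x) = (\<lambda>_. 0)" using A(1)[OF m1] A(1)[OF m2] by simp
    next
      fix \<sigma> assume sS: "\<sigma> \<in> \<Sigma>"
      show "linear (\<lambda>x. a * m1 \<sigma> x + b * m2 \<sigma> x)"
        using A(2)[OF m1] A(2)[OF m2] sS by (auto intro!: real_vector.module_hom_add lin_mult)
      fix w assume "w \<in> W"
      then have "m1 \<sigma> w \<in> R" "m2 \<sigma> w \<in> R" using A(2)[OF m1] A(2)[OF m2] sS by auto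
      then show "a * m1 \<sigma> w + b * m2 \<sigma> w \<in> R" using a b subringD(3,5)[OF sr] by metis
    next
      fix \<sigma> \<tau> assume sS: "\<sigma> \<in> \<Sigma>" and tS: "\<tau> \<in> \<Sigma>" and f: "cone_face \<tau> \<sigma>"
      show "linear (\<lambda>x. a * m1 \<sigma> x + b * m2 \<sigma> x - (a * m1 \<tau> x + b * m2 \<tau> x))"
        using A(2)[OF m1] A(2)[OF m2] sS tS
        by (auto intro!: real_vector.module_hom_add real_vector.module_hom_sub lin_mult)
      fix x assume "x \<in> \<tau>"
      then have "m1 \<sigma> x - m1 \<tau> x = 0" "m2 \<sigma> x - m2 \<tau> x = 0"
        using A(3)[OF m1] A(3)[OF m2] sS tS f by auto
      then show "a * m1 \<sigma> x + b * m2 \<sigma> x - (a * m1 \<tau> x + b * m2 \<tau> x) = 0"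
        by (simp add: algebra_simps)
    qed
  qed
  have P0: "(\<lambda>\<sigma> x. 0) \<in> P"
    unfolding P_def Pbar_fam_def dual_module_def perp_def by (auto simp: subringD(1)[OF sr] real_vector.linear_zero)
  have PhiR: "\<forall>v\<in>\<Phi> ` P. (\<forall>i. i \<notin> T \<longrightarrow> v i = 0) \<and> (\<forall>i. v i \<in> R)"
  proof (intro ballI conjI allI impI)
    fix v i assume "v \<in> \<Phi> ` P"
    then obtain m where m: "m \<in> P" and v: "v = \<Phi> m" by auto
    show "i \<notin> T \<Longrightarrow> v i = 0" unfolding v \<Phi>_def by simp
    show "v i \<in> R"
    proof (cases "i \<in> T")
      case False then show ?thesis unfolding v \<Phi>_def using subringD(1)[OF sr] by simp
    next
      case True
      then obtain \<sigma> y where p: "i = (\<sigma>, y)" and sS: "\<sigma> \<in> \<Sigma>" and yS: "y \<in> S \<sigma>" unfolding T_def by auto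
      have yW: "y \<in> W" using S[OF sS] yS NW by auto
      have "m \<sigma> y \<in> R" "m \<sigma>0 y \<in> R" using m sS s0 yW unfolding P_def Pbar_fam_def dual_module_def by auto
      then show ?thesis unfolding v \<Phi>_def using True p subringD(4)[OF sr] by simp
    qed
  qed
  have Msub: "(\<lambda>i. 0) \<in> \<Phi> ` P" "\<forall>v\<in>\<Phi> ` P. \<forall>w\<in>\<Phi> ` P. (\<lambda>i. v i + w i) \<in> \<Phi> ` P"
    "\<forall>r\<in>R. \<forall>v\<in>\<Phi> ` P. (\<lambda>i. r * v i) \<in> \<Phi> ` P"
  proof -
    have "\<Phi> (\<lambda>\<sigma> x. 0) = (\<lambda>i. 0)" unfolding \<Phi>_def by auto
    then show "(\<lambda>i. 0) \<in> \<Phi> ` P" using P0 by (metis image_eqI)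
    show "\<forall>v\<in>\<Phi> ` P. \<forall>w\<in>\<Phi> ` P. (\<lambda>i. v i + w i) \<in> \<Phi> ` P"
    proof (intro ballI)
      fix v w assume "v \<in> \<Phi> ` P" "w \<in> \<Phi> ` P"
      then obtain m1 m2 where m12: "m1 \<in> P" "m2 \<in> P" "v = \<Phi> m1" "w = \<Phi> m2" by auto
      have mem: "(\<lambda>\<sigma> x. 1 * m1 \<sigma> x + 1 * m2 \<sigma> x) \<in> P"
        by (rule Pclos[OF m12(1,2) subringD(2)[OF sr] subringD(2)[OF sr]])
      have eq: "(\<lambda>i. v i + w i) = \<Phi> (\<lambda>\<sigma> x. 1 * m1 \<sigma> x + 1 * m2 \<sigma> x)"
        unfolding Phi_lin m12(3,4) by simp
      show "(\<lambda>i. v i + w i) \<in> \<Phi> ` P" by (rule image_eqI[where f=\<Phi>, OF eq mem])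
    qed
    show "\<forall>r\<in>R. \<forall>v\<in>\<Phi> ` P. (\<lambda>i. r * v i) \<in> \<Phi> ` P"
    proof (intro ballI)
      fix r v assume rR: "r \<in> R" and "v \<in> \<Phi> ` P"
      then obtain m1 where m1: "m1 \<in> P" "v = \<Phi> m1" by auto
      have mem: "(\<lambda>\<sigma> x. r * m1 \<sigma> x + 0 * m1 \<sigma> x) \<in> P"
        by (rule Pclos[OF m1(1) m1(1) rR subringD(1)[OF sr]])
      have eq: "(\<lambda>i. r * v i) = \<Phi> (\<lambda>\<sigma> x. r * m1 \<sigma> x + 0 * m1 \<sigma> x)"
        unfolding Phi_lin m1(2) by simp
      show "(\<lambda>i. r * v i) \<in> \<Phi> ` P" by (rule image_eqI[where f=\<Phi>, OF eq mem])
    qed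
  qed
  obtain k :: nat and b :: "nat \<Rightarrow> 'a set \<times> 'a \<Rightarrow> real" where bM: "\<forall>j<k. b j \<in> \<Phi> ` P"
    and bsp: "\<forall>v\<in>\<Phi> ` P. \<exists>r. (\<forall>j<k. r j \<in> R) \<and> v = (\<lambda>i. \<Sum>j<k. r j * b j i)"
    and bind: "\<forall>r. (\<lambda>i. \<Sum>j<k. r j * b j i) = (\<lambda>i. 0) \<longrightarrow> (\<forall>j<k. r j = 0)"
    using free_submod[OF assms(1) finT PhiR Msub] by blast
  define e where "e = (\<lambda>j. SOME m. m \<in> P \<and> \<Phi> m = b j)"
  have e: "e j \<in> P \<and> \<Phi> (e j) = b j" if "j < k" for j
  proof -
    have "\<exists>m. m \<in> P \<and> \<Phi> m = b j" using bM that by force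
    then show ?thesis unfolding e_def by (rule someI_ex)
  qed
  have sumb: "(\<lambda>p. \<Sum>i<k. r i * \<Phi> (e i) p) = (\<lambda>p. \<Sum>i<k. r i * b i p)" for r
    using e by (auto intro!: sum.cong)
  show ?thesis
    unfolding Pic_W_free_def quotient_free_finite_rank_def W_def[symmetric] P_def[symmetric] L_def[symmetric]
  proof (intro exI[of _ k] exI[of _ e] conjI allI impI ballI)
    fix i assume "i < k" then show "e i \<in> P" using e by blast
  next
    fix m assume mP: "m \<in> P"
    then obtain r where rR: "\<forall>j<k. r j \<in> R" and mr: "\<Phi> m = (\<lambda>i. \<Sum>j<k. r j * b j i)"
      using bsp by blast
    have mA: "\<forall>\<sigma>. \<sigma> \<notin> \<Sigma> \<longrightarrow> m \<sigma> = (\<lambda>_. 0)" "\<forall>\<sigma>\<in>\<Sigma>. linear (m \<sigma>) \<and> (\<forall>w\<in>W. m \<sigma> w \<in> R)"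
      using mP unfolding P_def Pbar_fam_def dual_module_def by auto
    have eA: "\<forall>\<sigma>. \<sigma> \<notin> \<Sigma> \<longrightarrow> e i \<sigma> = (\<lambda>_. 0)" "\<forall>\<sigma>\<in>\<Sigma>. linear (e i \<sigma>) \<and> (\<forall>w\<in>W. e i \<sigma> w \<in> R)"
      if "i < k" for i
      using e[OF that] unfolding P_def Pbar_fam_def dual_module_def by auto
    have DL: "(\<lambda>s x. m s x - (\<Sum>i<k. r i * e i s x)) \<in> L"
    proof (rule kerL)
      show "\<forall>\<sigma>. \<sigma> \<notin> \<Sigma> \<longrightarrow> (\<lambda>x. m \<sigma> x - (\<Sum>i<k. r i * e i \<sigma> x)) = (\<lambda>_. 0)"
        using mA eA by auto
      show "\<forall>\<sigma>\<in>\<Sigma>. (\<lambda>x. m \<sigma> x - (\<Sum>i<k. r i * e i \<sigma> x)) \<in> dual_module R W"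
      proof
        fix \<sigma> assume sS: "\<sigma> \<in> \<Sigma>"
        show "(\<lambda>x. m \<sigma> x - (\<Sum>i<k. r i * e i \<sigma> x)) \<in> dual_module R W"
          unfolding dual_module_def
        proof (intro CollectI conjI ballI)
          show "linear (\<lambda>x. m \<sigma> x - (\<Sum>i<k. r i * e i \<sigma> x))"
            using mA eA sS by (auto intro!: real_vector.module_hom_sub real_vector.linear_compose_sum lin_mult)
          fix w assume "w \<in> W"
          then have "m \<sigma> w \<in> R" "(\<Sum>i<k. r i * e i \<sigma> w) \<in> R"
            using mA eA sS rR by (auto intro!: subring_sum[OF sr] subringD(5)[OF sr])
          then show "m \<sigma> w - (\<Sum>i<k. r i * e i \<sigma> w) \<in> R" using subringD(4)[OF sr] by blast
        qed
      qed
      show "\<Phi> (\<lambda>s x. m s x - (\<Sum>i<k. r i * e i s x)) = (\<lambda>p. 0)"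
        unfolding Phi_diff Phi_sum sumb mr by simp
    qed
    show "\<exists>r. (\<forall>i<k. r i \<in> R) \<and> (\<lambda>s x. m s x - (\<Sum>i<k. r i * e i s x)) \<in> L"
      using rR DL by blast
  next
    fix r j assume "(\<forall>i<k. r i \<in> R) \<and> (\<lambda>s x. \<Sum>i<k. r i * e i s x) \<in> L" "j < k"
    then have "\<Phi> (\<lambda>s x. \<Sum>i<k. r i * e i s x) = (\<lambda>p. 0)" using Lker by blast
    then have "(\<lambda>p. \<Sum>i<k. r i * b i p) = (\<lambda>p. 0)" unfolding Phi_sum sumb .
    then show "r j = 0" using bind \<open>j < k\<close> by blast
  qed
qed

end
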